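(* Assume the Nested Logit model with outside option described in the context satisfies Assumptions 1 and 2, and suppose the true choice probabilities $\phi(i,S)$ are known for all $S \in \mathcal{S} \cup \{[n]\}$ and all $i \in S \cup \{0\}$ (so all boost factors $\mathsf{BF}(i,S)$, $S\in\mathcal S$, $i\in S\cup\{0\}$, are known exactly). Then the matrix $E$ returned by Algorithm 1 (described in the context) satisfies $E[i,j] = \mathbf{1}(N(i) = N(j))$ for all $i \neq j$ in $[n]$.
   Context: Items: $[n]=\{1,\dots,n\}$ with $n\ge 2$. Experiment design: fix an integer base $b \ge 2$, let $L = \lceil \log_b n \rceil$, and fix an injective map $\sigma: [n] \to \{0,\dots,b-1\}^L$, writing $\sigma_\ell(i)$ for its $\ell$-th coordinate. For $\ell \in \{1,\dots,L\}$ and $d \in \{0,\dots,b-1\}$ let $S_{\ell,-d} = \{i \in [n] : \sigma_\ell(i) \neq d\}$, and let $\mathcal{S} = \{S_{\ell,-d}\}_{\ell,d}$; the control assortment $[n]$ is also offered. Nested Logit model with outside option: $\mathcal{N}$ is a partition of $[n]$ into nonempty disjoint nests; $N(i)$ denotes the nest containing $i$. Each item has a weight $v_i > 0$, each nest $N$ a parameter $\lambda_N \in [0,1]$, and each nest with $\lambda_N = 0$ an additional weight $v_N > 0$. For $S \subseteq [n]$ set $v_N(S) = (\sum_{i \in N \cap S} v_i)^{\lambda_N}$ if $\lambda_N \in (0,1]$ and $v_N(S) = v_N \mathbf{1}(N \cap S \neq \emptyset)$ if $\lambda_N = 0$. For $i \in S$, $\phi(i,S) = \frac{v_{N(i)}(S)}{1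 + \sum_{N \in \mathcal{N}} v_N(S)} \cdot \frac{v_i}{\sum_{j \in N(i) \cap S} v_j}$, and $\phi(0,S) = \frac{1}{1 + \sum_{N \in \mathcal{N}} v_N(S)}$. Boost factor: $\mathsf{BF}(i,S) = \phi(i,S)/\phi(i,[n])$ for $S \in \mathcal{S}$, $i \in S \cup \{0\}$. Multiplier: $\mathsf{Mult}(N,S) = \left(\frac{\sum_{j \in N} v_j}{\sum_{j \in N \cap S} v_j}\right)^{1-\lambda_N}$. Assumption 1: $\lambda_N = 1$ iff $|N| = 1$. Assumption 2: for every $S \in \mathcal{S}$ and distinct nests $N \neq N'$ with $\emptyset \neq N \cap S \neq N$ and $\emptyset \neq N' \cap S \neq N'$, $\mathsf{Mult}(N,S) \neq \mathsf{Mult}(N',S)$. Algorithm 1 maintains a symmetric matrix $E$ with entries $E[i,j] \in \{0,1,\text{null}\}$ for $i \neq j$ (every assignment to $E[i,j]$ is also made to $E[j,i]$), initially all null. (1) For each $S \in \mathcal{S}$ (in any order): for each pair of distinct $i,j \in S$, if $\mathsf{BF}(i,S) \neq \mathsf{BF}(j,S)$ set $E[i,j] \gets 0$; else if $\mathsf{BF}(i,S) = \mathsf{BF}(j,S) > \mathsf{BF}(0,S)$ set $E[i,j] \gets 1$. Then, with $\mathrm{NoBoost} = \{i \in S : \mathsf{BF}(i,S) = \mathsf{BF}(0,S)\}$, set $E[i,k] \gets 0$ for all $i \in \mathrm{NoBoost}$ and all $k \notin S$. (2) One-hop transitivity: compute the set of pairs $(i,j)$ with $E[i,j] = \text{null}$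 for which some $k \notin \{i,j\}$ has $E[i,k] = E[j,k] = 1$, and set $E[i,j] \gets 1$ for all such pairs. (3) Identify missing pairs: compute the set of pairs $(i,j)$ with $E[i,j] = \text{null}$ such that $E[i,k] \neq 1$ and $E[j,k] \neq 1$ for all $k \notin \{i,j\}$, and set $E[i,j] \gets 1$ for all such pairs. (4) Set every remaining null entry to $0$ and return $E$. *)

theory Defs
  imports Complex_Main "HOL-Library.Disjoint_Sets"
begin

text \<open>Items are 1..n (type nat); the index 0 denotes the outside option.\<close>

definition Lnum :: "nat \<Rightarrow> nat \<Rightarrow> nat" where
  "Lnum b n = nat \<lceil>log (real b) (real n)\<rceil>"

text \<open>sigma i l is the l-th coordinate (l in 1..L) of the code of item i.\<close>
definition valid_encoding :: "nat \<Rightarrow> nat \<Rightarrow> (nat \<Rightarrow> nat \<Rightarrow> nat) \<Rightarrow> bool" where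
  "valid_encoding n b \<sigma> \<longleftrightarrow>
     (\<forall>i\<in>{1..n}. \<forall>l\<in>{1..Lnum b n}. \<sigma> i l < b) \<and>
     (\<forall>i\<in>{1..n}. \<forall>j\<in>{1..n}. (\<forall>l\<in>{1..Lnum b n}. \<sigma> i l = \<sigma> j l) \<longrightarrow> i = j)"

definition exp_set :: "nat \<Rightarrow> (nat \<Rightarrow> nat \<Rightarrow> nat) \<Rightarrow> nat \<Rightarrow> nat \<Rightarrow> nat set" where
  "exp_set n \<sigma> l d = {i \<in> {1..n}. \<sigma> i l \<noteq> d}"

definition design :: "nat \<Rightarrow> nat \<Rightarrow> (nat \<Rightarrow> nat \<Rightarrow> nat) \<Rightarrow> nat set set" where
  "design n b \<sigma> = {exp_set n \<sigma> l d | l d. l \<in> {1..Lnum b n} \<and> d < b}"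

definition nest_of :: "nat set set \<Rightarrow> nat \<Rightarrow> nat set" where
  "nest_of P i = (THE N. N \<in> P \<and> i \<in> N)"

definition nest_weight ::
  "(nat \<Rightarrow> real) \<Rightarrow> (nat set \<Rightarrow> real) \<Rightarrow> (nat set \<Rightarrow> real) \<Rightarrow> nat set \<Rightarrow> nat set \<Rightarrow> real" where
  "nest_weight v lam vN N S =
     (if lam N = 0 then (if N \<inter> S \<noteq> {} then vN N else 0)
      else (\<Sum>j\<in>N \<inter> S. v j) powr lam N)"

definition choice_prob ::
  "nat set set \<Rightarrow> (nat \<Rightarrow> real) \<Rightarrow> (nat set \<Rightarrow> real) \<Rightarrow> (nat set \<Rightarrow> real) \<Rightarrow> nat \<Rightarrow> nat set \<Rightarrow> real" where
  "choice_prob P v lam vN i S =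
     (if i = 0 then 1 / (1 + (\<Sum>N\<in>P. nest_weight v lam vN N S))
      else nest_weight v lam vN (nest_of P i) S / (1 + (\<Sum>N\<in>P. nest_weight v lam vN N S))
           * (v i / (\<Sum>j\<in>nest_of P i \<inter> S. v j)))"

definition boost_factor ::
  "nat set set \<Rightarrow> (nat \<Rightarrow> real) \<Rightarrow> (nat set \<Rightarrow> real) \<Rightarrow> (nat set \<Rightarrow> real) \<Rightarrow> nat \<Rightarrow> nat \<Rightarrow> nat set \<Rightarrow> real" where
  "boost_factor P v lam vN n i S = choice_prob P v lam vN i S / choice_prob P v lam vN i {1..n}"

definition mult :: "(nat \<Rightarrow> real) \<Rightarrow> (nat set \<Rightarrow> real) \<Rightarrow> nat set \<Rightarrow> nat set \<Rightarrow> real" where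
  "mult v lam N S = ((\<Sum>j\<in>N. v j) / (\<Sum>j\<in>N \<inter> S. v j)) powr (1 - lam N)"

definition NL_model ::
  "nat \<Rightarrow> nat set set \<Rightarrow> (nat \<Rightarrow> real) \<Rightarrow> (nat set \<Rightarrow> real) \<Rightarrow> (nat set \<Rightarrow> real) \<Rightarrow> bool" where
  "NL_model n P v lam vN \<longleftrightarrow>
     partition_on {1..n} P \<and>
     (\<forall>i\<in>{1..n}. 0 < v i) \<and>
     (\<forall>N\<in>P. 0 \<le> lam N \<and> lam N \<le> 1) \<and>
     (\<forall>N\<in>P. lam N = 0 \<longrightarrow> 0 < vN N)"

definition assumption1 :: "nat set set \<Rightarrow> (nat set \<Rightarrow> real) \<Rightarrow> bool" where
  "assumption1 P lam \<longleftrightarrow> (\<forall>N\<in>P. lam N = 1 \<longleftrightarrow> card N = 1)"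

definition assumption2 ::
  "nat set set \<Rightarrow> nat set set \<Rightarrow> (nat \<Rightarrow> real) \<Rightarrow> (nat set \<Rightarrow> real) \<Rightarrow> bool" where
  "assumption2 SS P v lam \<longleftrightarrow>
     (\<forall>S\<in>SS. \<forall>N\<in>P. \<forall>N'\<in>P.
        N \<noteq> N' \<and> N \<inter> S \<noteq> {} \<and> N \<inter> S \<noteq> N \<and> N' \<inter> S \<noteq> {} \<and> N' \<inter> S \<noteq> N'
        \<longrightarrow> mult v lam N S \<noteq> mult v lam N' S)"

text \<open>Matrix entries: None = null, Some 0, Some 1. BF i S is the boost factor, BF 0 S that
  of the outside option.\<close>
type_synonym emat = "nat \<Rightarrow> nat \<Rightarrow> nat option"

definition step1_update :: "nat \<Rightarrow> (nat \<Rightarrow> nat set \<Rightarrow> real) \<Rightarrow> nat set \<Rightarrow> emat \<Rightarrow> emat" where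
  "step1_update n BF S E = (\<lambda>i j.
     if i \<in> S \<and> j \<in> S \<and> i \<noteq> j then
       (if BF i S \<noteq> BF j S then Some 0
        else if BF i S > BF 0 S then Some 1
        else E i j)
     else if i \<noteq> j \<and> i \<in> {1..n} \<and> j \<in> {1..n} \<and>
             ((i \<in> S \<and> BF i S = BF 0 S \<and> j \<notin> S) \<or> (j \<in> S \<and> BF j S = BF 0 S \<and> i \<notin> S))
       then Some 0
     else E i j)"

definition step2 :: "nat \<Rightarrow> emat \<Rightarrow> emat" where
  "step2 n E = (\<lambda>i j.
     if E i j = None \<and> i \<noteq> j \<and> i \<in> {1..n} \<and> j \<in> {1..n} \<and>
        (\<exists>k\<in>{1..n}. k \<noteq> i \<and> k \<noteq> j \<and> E i k = Some 1 \<and> E j k = Some 1)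
     then Some 1 else E i j)"

definition step3 :: "nat \<Rightarrow> emat \<Rightarrow> emat" where
  "step3 n E = (\<lambda>i j.
     if E i j = None \<and> i \<noteq> j \<and> i \<in> {1..n} \<and> j \<in> {1..n} \<and>
        (\<forall>k\<in>{1..n}. k \<noteq> i \<and> k \<noteq> j \<longrightarrow> E i k \<noteq> Some 1 \<and> E j k \<noteq> Some 1)
     then Some 1 else E i j)"

definition step4 :: "emat \<Rightarrow> nat \<Rightarrow> nat \<Rightarrow> nat" where
  "step4 E = (\<lambda>i j. case E i j of None \<Rightarrow> 0 | Some x \<Rightarrow> x)"

text \<open>ord is the (arbitrary) order in which the assortments of the design are processed.\<close>
definition algorithm1 :: "nat \<Rightarrow> (nat \<Rightarrow> nat set \<Rightarrow> real) \<Rightarrow> nat set list \<Rightarrow> nat \<Rightarrow> nat \<Rightarrow> nat" where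
  "algorithm1 n BF ord =
     step4 (step3 n (step2 n (foldl (\<lambda>E S. step1_update n BF S E) (\<lambda>_ _. None) ord)))"

end

theory Submission
  imports Defs
begin


lemma gen: fixes p q DS Dn vi a c :: real
  assumes "0 < q" "0 < DS" "0 < Dn" "0 < vi" "0 < a" "0 < c"
  shows "(p / DS * (vi / a)) / (q / Dn * (vi / c)) = (Dn / DS) * ((p / q) * (c / a))"
  using assms by (simp add: field_simps)
lemma gen2: fixes a c l :: real assumes "0 < a" "0 < c"
  shows "(a powr l / c powr l) * (c / a) = (c / a) powr (1 - l)"
  using assms by (simp add: powr_diff powr_divide mult.commute)

locale setting =
  fixes n b :: nat and \<sigma> :: "nat \<Rightarrow> nat \<Rightarrow> nat" and P :: "nat set set"
    and v :: "nat \<Rightarrow> real" and lam vN :: "nat set \<Rightarrow> real"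
  assumes enc: "valid_encoding n b \<sigma>"
    and nl: "NL_model n P v lam vN"
    and a1: "assumption1 P lam"
    and a2: "assumption2 (design n b \<sigma>) P v lam"
begin

lemma part: "partition_on {1..n} P" using nl by (simp add: NL_model_def)
lemma vpos: "i \<in> {1..n} \<Longrightarrow> 0 < v i" using nl by (simp add: NL_model_def)
lemma lam01: "N \<in> P \<Longrightarrow> 0 \<le> lam N \<and> lam N \<le> 1" using nl by (simp add: NL_model_def)
lemma vNpos: "N \<in> P \<Longrightarrow> lam N = 0 \<Longrightarrow> 0 < vN N" using nl by (simp add: NL_model_def)

lemma nestP: "N \<in> P \<Longrightarrow> N \<subseteq> {1..n}"
  using partition_onD1[OF part] by blast

lemma nest_fin: "N \<in> P \<Longrightarrow> finite N"
  using nestP finite_subset by blast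

lemma nest_of_prop: assumes "i \<in> {1..n}" shows "nest_of P i \<in> P \<and> i \<in> nest_of P i"
proof -
  obtain N where N: "N \<in> P" "i \<in> N" using partition_onD1[OF part] assms by blast
  have dj: "disjoint P" by (rule partition_onD2[OF part])
  have u: "M = N" if "M \<in> P" "i \<in> M" for M
  proof (rule ccontr)
    assume "M \<noteq> N"
    hence "M \<inter> N = {}" using disjointD[OF dj that(1) N(1)] by simp
    thus False using that(2) N(2) by blast
  qed
  have "nest_of P i = N" unfolding nest_of_def
    by (rule the_equality) (simp add: N, use u in blast)
  thus ?thesis using N by simp
qed

lemma in_nest: assumes "i \<in> {1..n}" "k \<in> nest_of P i" shows "k \<in> {1..n}"
proof -
  have "nest_of P i \<in> P" using nest_of_prop[OF assms(1)] by simp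
  hence "nest_of P i \<subseteq> {1..n}" by (rule nestP)
  thus ?thesis using assms(2) by blast
qed

lemma a2D: "S \<in> design n b \<sigma> \<Longrightarrow> N \<in> P \<Longrightarrow> N' \<in> P \<Longrightarrow> N \<noteq> N' \<Longrightarrow> N \<inter> S \<noteq> {} \<Longrightarrow>
  N \<inter> S \<noteq> N \<Longrightarrow> N' \<inter> S \<noteq> {} \<Longrightarrow> N' \<inter> S \<noteq> N' \<Longrightarrow> mult v lam N S \<noteq> mult v lam N' S"
  using a2 unfolding assumption2_def by blast

lemma nest_eq_iff: assumes "i \<in> {1..n}" "j \<in> {1..n}"
  shows "nest_of P i = nest_of P j \<longleftrightarrow> j \<in> nest_of P i"
proof -
  have dj: "disjoint P" by (rule partition_onD2[OF part])
  have "M = N" if "M \<in> P" "N \<in> P" "x \<in> M" "x \<in> N" for M N x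
  proof (rule ccontr)
    assume "M \<noteq> N"
    hence "M \<inter> N = {}" using disjointD[OF dj that(1,2)] by simp
    thus False using that(3,4) by blast
  qed
  thus ?thesis using nest_of_prop[OF assms(1)] nest_of_prop[OF assms(2)] by metis
qed

lemma nw_nonneg: "N \<in> P \<Longrightarrow> 0 \<le> nest_weight v lam vN N S"
  unfolding nest_weight_def using vNpos by fastforce

definition D where "D S = 1 + (\<Sum>N\<in>P. nest_weight v lam vN N S)"

lemma D_pos: "0 < D S"
proof -
  have "0 \<le> (\<Sum>N\<in>P. nest_weight v lam vN N S)" by (rule sum_nonneg) (use nw_nonneg in auto)
  thus ?thesis unfolding D_def by simp
qed

abbreviation BF where "BF \<equiv> boost_factor P v lam vN n"

lemma BF0: "BF 0 S = D {1..n} / D S"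
  unfolding boost_factor_def choice_prob_def D_def[symmetric] using D_pos
  by (simp add: field_simps)

lemma BF0_pos: "0 < BF 0 S" using BF0 D_pos by simp

lemma BF_formula: assumes S: "S \<subseteq> {1..n}" and i: "i \<in> S"
  shows "BF i S = BF 0 S * mult v lam (nest_of P i) S"
proof -
  define N where "N = nest_of P i"
  have iN: "i \<in> {1..n}" using S i by auto
  have NP: "N \<in> P" and iinN: "i \<in> N" using nest_of_prop[OF iN] N_def by auto
  have fin: "finite N" using nest_fin NP by simp
  have Nn: "N \<inter> {1..n} = N" using nestP NP by auto
  define a where "a = (\<Sum>j\<in>N \<inter> S. v j)"
  define c where "c = (\<Sum>j\<in>N. v j)"
  have allp: "\<forall>x\<in>N. 0 < v x" using NP nestP vpos by blast
  have apos: "0 < a" unfolding a_def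
    by (rule sum_pos2[of _ i]) (use fin i iinN allp in auto)
  have cpos: "0 < c" unfolding c_def
    by (rule sum_pos2[of _ i]) (use fin i iinN allp in auto)
  have i0: "i \<noteq> 0" using iN by auto
  have vi: "0 < v i" using vpos iN by simp
  have cpS: "choice_prob P v lam vN i S = nest_weight v lam vN N S / D S * (v i / a)"
    unfolding choice_prob_def D_def a_def N_def using i0 by simp
  have cpn: "choice_prob P v lam vN i {1..n} = nest_weight v lam vN N {1..n} / D {1..n} * (v i / c)"
    unfolding choice_prob_def D_def c_def N_def using i0 Nn N_def by simp
  have m: "mult v lam N S = (c / a) powr (1 - lam N)"
    unfolding mult_def a_def c_def by simp
  have DS: "0 < D S" "0 < D {1..n}" using D_pos by auto
  have vi': "0 < nest_weight v lam vN N {1..n}"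
  proof (cases "lam N = 0")
    case True thus ?thesis unfolding nest_weight_def using vNpos[OF NP] iinN iN by auto
  next
    case False thus ?thesis unfolding nest_weight_def using cpos Nn by (simp add: c_def)
  qed
  have base: "BF i S = (D {1..n} / D S) * ((nest_weight v lam vN N S / nest_weight v lam vN N {1..n}) * (c / a))"
    unfolding boost_factor_def cpS cpn by (rule gen) (use vi' DS vi apos cpos in auto)
  have "(nest_weight v lam vN N S / nest_weight v lam vN N {1..n}) * (c / a) = mult v lam N S"
  proof (cases "lam N = 0")
    case True
    have "N \<inter> S \<noteq> {}" "N \<inter> {1..n} \<noteq> {}" using i iinN iN by auto
    hence w: "nest_weight v lam vN N S = vN N" "nest_weight v lam vN N {1..n} = vN N"
      unfolding nest_weight_def using True by auto
    have vn: "0 < vN N" using vNpos NP True by simp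
    show ?thesis unfolding m w using True vn apos cpos by simp
  next
    case False
    have w: "nest_weight v lam vN N S = a powr lam N" "nest_weight v lam vN N {1..n} = c powr lam N"
      unfolding nest_weight_def using False Nn a_def c_def by auto
    show ?thesis unfolding m w using gen2 apos cpos by simp
  qed
  thus ?thesis using base BF0 N_def by simp
qed

lemma mult_props: assumes S: "S \<subseteq> {1..n}" and i: "i \<in> S"
  shows "nest_of P i \<subseteq> S \<Longrightarrow> mult v lam (nest_of P i) S = 1"
    and "\<not> nest_of P i \<subseteq> S \<Longrightarrow> 1 < mult v lam (nest_of P i) S"
proof -
  define N where "N = nest_of P i"
  have iN: "i \<in> {1..n}" using S i by auto
  have NP: "N \<in> P" and iinN: "i \<in> N" using nest_of_prop[OF iN] N_def by auto
  have fin: "finite N" using nest_fin NP by simp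
  have allp: "\<forall>x\<in>N. 0 < v x" using NP nestP vpos by blast
  have cpos: "0 < (\<Sum>j\<in>N. v j)"
    by (rule sum_pos2[of _ i]) (use fin i iinN allp in auto)
  {
    assume "nest_of P i \<subseteq> S"
    hence "N \<inter> S = N" using N_def by auto
    thus "mult v lam (nest_of P i) S = 1" unfolding mult_def N_def[symmetric] using cpos by simp
  }
  {
    assume "\<not> nest_of P i \<subseteq> S"
    then obtain z where z: "z \<in> N" "z \<notin> S" using N_def by auto
    have apos: "0 < (\<Sum>j\<in>N \<inter> S. v j)"
      by (rule sum_pos2[of _ i]) (use fin i iinN allp in auto)
    have lt: "(\<Sum>j\<in>N \<inter> S. v j) < (\<Sum>j\<in>N. v j)"
      by (rule sum_strict_mono2[of _ _ z]) (use fin z allp in auto)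
    have "card N \<noteq> 1" using z iinN i
      by (metis card_1_singletonE singletonD)
    hence "lam N \<noteq> 1" using a1 NP unfolding assumption1_def by auto
    hence l: "lam N < 1" using lam01[OF NP] by auto
    have "1 < (\<Sum>j\<in>N. v j) / (\<Sum>j\<in>N \<inter> S. v j)" using apos lt by simp
    thus "1 < mult v lam (nest_of P i) S" unfolding mult_def N_def[symmetric]
      using l by (intro gr_one_powr) auto
  }
qed

lemma boost_iff: assumes S: "S \<subseteq> {1..n}" and i: "i \<in> S"
  shows "BF 0 S < BF i S \<longleftrightarrow> \<not> nest_of P i \<subseteq> S"
    and "BF i S = BF 0 S \<longleftrightarrow> nest_of P i \<subseteq> S"
  using BF_formula[OF S i] mult_props[OF S i] BF0_pos[of S]
  by (cases "nest_of P i \<subseteq> S"; simp)+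

lemma design_sub: "S \<in> design n b \<sigma> \<Longrightarrow> S \<subseteq> {1..n}"
  unfolding design_def exp_set_def by auto

lemma exp_mem: "x \<in> exp_set n \<sigma> l d \<longleftrightarrow> x \<in> {1..n} \<and> \<sigma> x l \<noteq> d"
  unfolding exp_set_def by auto

lemma exp_design: "l \<in> {1..Lnum b n} \<Longrightarrow> d < b \<Longrightarrow> exp_set n \<sigma> l d \<in> design n b \<sigma>"
  unfolding design_def by auto

lemma sig_lt: "x \<in> {1..n} \<Longrightarrow> l \<in> {1..Lnum b n} \<Longrightarrow> \<sigma> x l < b"
proof -
  have h: "\<forall>i\<in>{1..n}. \<forall>l\<in>{1..Lnum b n}. \<sigma> i l < b"
    using enc unfolding valid_encoding_def by (rule conjunct1)
  assume "x \<in> {1..n}" "l \<in> {1..Lnum b n}"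
  thus ?thesis using h by simp
qed

lemma sig_inj: assumes "x \<in> {1..n}" "y \<in> {1..n}" "\<And>l. l \<in> {1..Lnum b n} \<Longrightarrow> \<sigma> x l = \<sigma> y l"
  shows "x = y"
proof -
  have h: "\<forall>i\<in>{1..n}. \<forall>j\<in>{1..n}. (\<forall>l\<in>{1..Lnum b n}. \<sigma> i l = \<sigma> j l) \<longrightarrow> i = j"
    using enc unfolding valid_encoding_def by (rule conjunct2)
  have "\<forall>l\<in>{1..Lnum b n}. \<sigma> x l = \<sigma> y l" using assms(3) by (rule ballI)
  thus ?thesis using h assms(1,2) by (rule_tac mp[OF bspec[OF bspec[OF h]]])
qed

definition forces :: "nat set \<Rightarrow> nat \<Rightarrow> nat \<Rightarrow> bool" where
  "forces S i j \<longleftrightarrow> (i \<in> S \<and> j \<in> S \<and> i \<noteq> j \<and> (BF i S \<noteq> BF j S \<or> BF 0 S < BF i S)) \<or>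
     (i \<noteq> j \<and> i \<in> {1..n} \<and> j \<in> {1..n} \<and>
      ((i \<in> S \<and> BF i S = BF 0 S \<and> j \<notin> S) \<or> (j \<in> S \<and> BF j S = BF 0 S \<and> i \<notin> S)))"

lemma forces_sym: "forces S i j = forces S j i"
  unfolding forces_def by auto

lemma step1_None: "(step1_update n BF S E i j = None) \<longleftrightarrow> (E i j = None \<and> \<not> forces S i j)"
  unfolding step1_update_def forces_def by auto

lemma fold_None: "(foldl (\<lambda>E S. step1_update n BF S E) E0 xs i j = None) \<longleftrightarrow>
   (E0 i j = None \<and> (\<forall>S\<in>set xs. \<not> forces S i j))"
  by (induction xs arbitrary: E0) (simp_all add: step1_None)

definition correct :: "(nat \<Rightarrow> nat \<Rightarrow> nat option) \<Rightarrow> bool" where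
  "correct E \<longleftrightarrow> (\<forall>i\<in>{1..n}. \<forall>j\<in>{1..n}. i \<noteq> j \<longrightarrow> E i j \<noteq> None \<longrightarrow>
      E i j = Some (if nest_of P i = nest_of P j then 1 else 0))"

lemma noboost_diff: assumes S: "S \<subseteq> {1..n}" "i \<in> S" "BF i S = BF 0 S" "j \<in> {1..n}" "j \<notin> S"
  shows "nest_of P i \<noteq> nest_of P j"
proof -
  have "nest_of P i \<subseteq> S" using boost_iff(2)[OF S(1,2)] S(3) by simp
  hence "j \<notin> nest_of P i" using S by auto
  moreover have "i \<in> {1..n}" using S by auto
  ultimately show ?thesis using nest_eq_iff[of i j] S(4) by simp
qed

lemma step1_correct: assumes SD: "S \<in> design n b \<sigma>" and c: "correct E"
  shows "correct (step1_update n BF S E)"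
  unfolding correct_def
proof (intro ballI impI)
  fix i j assume ij: "i \<in> {1..n}" "j \<in> {1..n}" "i \<noteq> j" and ne: "step1_update n BF S E i j \<noteq> None"
  have Ssub: "S \<subseteq> {1..n}" using design_sub SD by simp
  show "step1_update n BF S E i j = Some (if nest_of P i = nest_of P j then 1 else 0)"
  proof (cases "i \<in> S \<and> j \<in> S")
    case True
    hence iS: "i \<in> S" and jS: "j \<in> S" by auto
    show ?thesis
    proof (cases "BF i S \<noteq> BF j S")
      case True
      have "nest_of P i \<noteq> nest_of P j"
        using True BF_formula[OF Ssub iS] BF_formula[OF Ssub jS] by auto
      thus ?thesis using True iS jS ij unfolding step1_update_def by auto
    next
      case False
      show ?thesis
      proof (cases "BF 0 S < BF i S")
        case gt: True
        have m: "mult v lam (nest_of P i) S = mult v lam (nest_of P j) S"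
          using False BF_formula[OF Ssub iS] BF_formula[OF Ssub jS] BF0_pos[of S] by auto
        have ni: "\<not> nest_of P i \<subseteq> S" using boost_iff(1)[OF Ssub iS] gt by simp
        have nj: "\<not> nest_of P j \<subseteq> S" using boost_iff(1)[OF Ssub jS] gt False by simp
        have eq: "nest_of P i = nest_of P j"
        proof (rule ccontr)
          assume neq: "nest_of P i \<noteq> nest_of P j"
          have "nest_of P i \<in> P" "i \<in> nest_of P i" "nest_of P j \<in> P" "j \<in> nest_of P j"
            using nest_of_prop ij by auto
          then have "mult v lam (nest_of P i) S \<noteq> mult v lam (nest_of P j) S"
            apply (intro a2D[OF SD])
            using neq ni nj iS jS by auto
          thus False using m by simp
        qed
        thus ?thesis using False gt iS jS ij unfolding step1_update_def by auto
      next
        case le: False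
        have "step1_update n BF S E i j = E i j" using False le iS jS ij unfolding step1_update_def by auto
        thus ?thesis using c ij ne unfolding correct_def by auto
      qed
    qed
  next
    case False
    show ?thesis
    proof (cases "(i \<in> S \<and> BF i S = BF 0 S \<and> j \<notin> S) \<or> (j \<in> S \<and> BF j S = BF 0 S \<and> i \<notin> S)")
      case True
      have "nest_of P i \<noteq> nest_of P j"
        using True noboost_diff[OF Ssub, of i j] noboost_diff[OF Ssub, of j i] ij by auto
      thus ?thesis using True False ij unfolding step1_update_def by auto
    next
      case F2: False
      have "step1_update n BF S E i j = E i j" using False F2 unfolding step1_update_def by auto
      thus ?thesis using c ij ne unfolding correct_def by auto
    qed
  qed
qed

lemma fold_correct: "set xs \<subseteq> design n b \<sigma> \<Longrightarrow> correct E0 \<Longrightarrow>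
   correct (foldl (\<lambda>E S. step1_update n BF S E) E0 xs)"
  by (induction xs arbitrary: E0) (auto intro: step1_correct)

lemma correct_val: "correct E \<Longrightarrow> i \<in> {1..n} \<Longrightarrow> j \<in> {1..n} \<Longrightarrow> i \<noteq> j \<Longrightarrow> E i j \<noteq> None \<Longrightarrow>
  E i j = Some (if nest_of P i = nest_of P j then 1 else 0)"
  unfolding correct_def by blast

lemma correct_one: assumes "correct E" "i \<in> {1..n}" "j \<in> {1..n}" "i \<noteq> j" "E i j = Some 1"
  shows "nest_of P i = nest_of P j"
proof -
  have "E i j = Some (if nest_of P i = nest_of P j then 1 else 0)"
    using correct_val[OF assms(1-4)] assms(5) by simp
  thus ?thesis using assms(5) by (cases "nest_of P i = nest_of P j") simp_all
qed

lemma step2_correct: assumes c: "correct E" shows "correct (step2 n E)"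
  unfolding correct_def
proof (intro ballI impI)
  fix i j assume ij: "i \<in> {1..n}" "j \<in> {1..n}" "i \<noteq> j" and ne: "step2 n E i j \<noteq> None"
  show "step2 n E i j = Some (if nest_of P i = nest_of P j then 1 else 0)"
  proof (cases "E i j = None \<and> (\<exists>k\<in>{1..n}. k \<noteq> i \<and> k \<noteq> j \<and> E i k = Some 1 \<and> E j k = Some 1)")
    case True
    then obtain k where k: "k \<in> {1..n}" "k \<noteq> i" "k \<noteq> j" "E i k = Some 1" "E j k = Some 1" by auto
    have "nest_of P i = nest_of P k" "nest_of P j = nest_of P k"
      using correct_one[OF c ij(1) k(1) k(2)[symmetric] k(4)] correct_one[OF c ij(2) k(1) k(3)[symmetric] k(5)]
      by simp_all
    thus ?thesis using True ij unfolding step2_def by auto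
  next
    case False
    hence "step2 n E i j = E i j" unfolding step2_def by auto
    thus ?thesis using correct_val[OF c ij] ne by simp
  qed
qed

lemma step2_keep: "E i j \<noteq> None \<Longrightarrow> step2 n E i j = E i j" unfolding step2_def by auto
lemma step3_keep: "E i j \<noteq> None \<Longrightarrow> step3 n E i j = E i j" unfolding step3_def by auto

lemma null_same:
  assumes xy: "x \<in> {1..n}" "y \<in> {1..n}" "x \<noteq> y" "nest_of P x = nest_of P y"
    and nf: "\<not> (\<exists>S\<in>design n b \<sigma>. forces S x y)" and l: "l \<in> {1..Lnum b n}"
    and z: "z \<in> nest_of P x"
  shows "\<sigma> z l = \<sigma> x l \<or> \<sigma> z l = \<sigma> y l"
proof (rule ccontr)
  assume a: "\<not> ?thesis"
  have zn: "z \<in> {1..n}" using in_nest xy(1) z(1) by blast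
  define S where "S = exp_set n \<sigma> l (\<sigma> z l)"
  have SD: "S \<in> design n b \<sigma>" unfolding S_def using exp_design l sig_lt zn by simp
  have xS: "x \<in> S" "y \<in> S" "z \<notin> S" using a xy zn unfolding S_def exp_mem by auto
  have "BF 0 S < BF x S" using boost_iff(1)[OF design_sub[OF SD] xS(1)] xS z by auto
  hence "forces S x y" using xS xy unfolding forces_def by auto
  thus False using nf SD by auto
qed

end

locale setting2 = setting +
  fixes ord :: "nat set list"
  assumes ord: "set ord = design n b \<sigma>"
begin

definition E1 where "E1 = foldl (\<lambda>E S. step1_update n BF S E) (\<lambda>_ _. None) ord"

lemma E1_correct: "correct E1"
  unfolding E1_def by (rule fold_correct) (auto simp: ord correct_def)

lemma E1_None: "E1 i j = None \<longleftrightarrow> \<not> (\<exists>S\<in>design n b \<sigma>. forces S i j)"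
  unfolding E1_def fold_None ord by simp

lemma E2_correct: "correct (step2 n E1)" using step2_correct E1_correct by simp


lemma E1_val: "i \<in> {1..n} \<Longrightarrow> j \<in> {1..n} \<Longrightarrow> i \<noteq> j \<Longrightarrow> E1 i j \<noteq> None \<Longrightarrow>
   E1 i j = Some (if nest_of P i = nest_of P j then 1 else 0)"
  using E1_correct unfolding correct_def by blast

lemma E2_val: "i \<in> {1..n} \<Longrightarrow> j \<in> {1..n} \<Longrightarrow> i \<noteq> j \<Longrightarrow> step2 n E1 i j \<noteq> None \<Longrightarrow>
   step2 n E1 i j = Some (if nest_of P i = nest_of P j then 1 else 0)"
  using E2_correct unfolding correct_def by blast

lemma same_third:
  assumes ij: "i \<in> {1..n}" "j \<in> {1..n}" "i \<noteq> j" "nest_of P i = nest_of P j"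
    and nul: "E1 i j = None" and k: "k \<in> nest_of P i" "k \<noteq> i" "k \<noteq> j"
  shows "E1 i k = Some 1"
proof -
  have kn: "k \<in> {1..n}" using in_nest ij(1) k(1) by blast
  have nk: "nest_of P i = nest_of P k" using nest_eq_iff ij kn k by auto
  have nf: "\<not> (\<exists>S\<in>design n b \<sigma>. forces S i j)" using nul E1_None[of i j] by simp
  have "E1 i k \<noteq> None"
  proof
    assume nk0: "E1 i k = None"
    have nf2: "\<not> (\<exists>S\<in>design n b \<sigma>. forces S i k)" using nk0 E1_None[of i k] by simp
    have jin: "j \<in> nest_of P i" using nest_eq_iff ij by auto
    have "k = j"
    proof (rule sig_inj[OF kn ij(2)])
      fix l assume l: "l \<in> {1..Lnum b n}"
      have 1: "\<sigma> k l = \<sigma> i l \<or> \<sigma> k l = \<sigma> j l" using null_same[OF ij nf l k(1)] .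
      have 2: "\<sigma> j l = \<sigma> i l \<or> \<sigma> j l = \<sigma> k l"
        using null_same[OF ij(1) kn k(2)[symmetric] nk nf2 l jin] .
      show "\<sigma> k l = \<sigma> j l" using 1 2 by auto
    qed
    thus False using k by simp
  qed
  thus ?thesis using E1_val[OF ij(1) kn k(2)[symmetric]] nk by simp
qed

lemma main_pair:
  assumes ij: "i \<in> {1..n}" "j \<in> {1..n}" "i \<noteq> j"
  shows "step4 (step3 n (step2 n E1)) i j = (if nest_of P i = nest_of P j then 1 else 0)"
proof (cases "E1 i j = None")
  case False
  have "step3 n (step2 n E1) i j = E1 i j"
  proof -
    have "step2 n E1 i j = E1 i j" using False by (rule step2_keep)
    thus ?thesis using False step3_keep[of "step2 n E1" i j] by simp
  qed
  thus ?thesis using E1_val[OF ij False] unfolding step4_def by simp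
next
  case nul: True
  have nf: "\<not> (\<exists>S\<in>design n b \<sigma>. forces S i j)" using nul E1_None[of i j] by simp
  show ?thesis
  proof (cases "nest_of P i = nest_of P j")
    case same: True
    show ?thesis
    proof (cases "\<exists>k\<in>nest_of P i. k \<noteq> i \<and> k \<noteq> j")
      case True
      then obtain k where k: "k \<in> nest_of P i" "k \<noteq> i" "k \<noteq> j" by auto
      have kn: "k \<in> {1..n}" using in_nest ij(1) k(1) by blast
      have "E1 i k = Some 1" using same_third[OF ij same nul k] .
      moreover have "E1 j k = Some 1"
      proof -
        have "E1 j i = None" using nf forces_sym E1_None[of j i] by simp
        thus ?thesis using same_third[OF ij(2,1) ij(3)[symmetric] same[symmetric]] k same by simp
      qed
      ultimately have "step2 n E1 i j = Some 1" unfolding step2_def using nul ij kn k by auto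
      hence "step3 n (step2 n E1) i j = Some 1" using step3_keep[of "step2 n E1" i j] by simp
      thus ?thesis using same unfolding step4_def by simp
    next
      case False
      have no1: "E i k \<noteq> Some 1" if "correct E" "k \<in> {1..n}" "k \<noteq> i" "k \<noteq> j" for E k
      proof
        assume "E i k = Some 1"
        hence "nest_of P i = nest_of P k" using correct_one[OF that(1) ij(1) that(2) that(3)[symmetric]] by simp
        hence "k \<in> nest_of P i" using nest_eq_iff ij that by auto
        thus False using False that by auto
      qed
      have no1j: "E j k \<noteq> Some 1" if "correct E" "k \<in> {1..n}" "k \<noteq> i" "k \<noteq> j" for E k
      proof
        assume "E j k = Some 1"
        hence "nest_of P j = nest_of P k" using correct_one[OF that(1) ij(2) that(2) that(4)[symmetric]] by simp
        hence "k \<in> nest_of P i" using nest_eq_iff ij that same by auto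
        thus False using False that by auto
      qed
      have e2: "step2 n E1 i j = None" unfolding step2_def using nul no1[OF E1_correct] by auto
      have "step3 n (step2 n E1) i j = Some 1" unfolding step3_def
        using e2 ij no1[OF E2_correct] no1j[OF E2_correct] by auto
      thus ?thesis using same unfolding step4_def by simp
    qed
  next
    case diff: False
    have e2: "step2 n E1 i j = None"
    proof -
      have "\<not> (\<exists>k\<in>{1..n}. k \<noteq> i \<and> k \<noteq> j \<and> E1 i k = Some 1 \<and> E1 j k = Some 1)"
      proof
        assume "\<exists>k\<in>{1..n}. k \<noteq> i \<and> k \<noteq> j \<and> E1 i k = Some 1 \<and> E1 j k = Some 1"
        then obtain k where k: "k \<in> {1..n}" "k \<noteq> i" "k \<noteq> j" "E1 i k = Some 1" "E1 j k = Some 1" by auto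
        have "nest_of P i = nest_of P k" "nest_of P j = nest_of P k"
          using correct_one[OF E1_correct ij(1) k(1) k(2)[symmetric] k(4)]
            correct_one[OF E1_correct ij(2) k(1) k(3)[symmetric] k(5)] by simp_all
        thus False using diff by simp
      qed
      thus ?thesis unfolding step2_def using nul by auto
    qed
    have ex: "\<exists>k\<in>{1..n}. k \<noteq> i \<and> k \<noteq> j \<and> (step2 n E1 i k = Some 1 \<or> step2 n E1 j k = Some 1)"
    proof (rule ccontr)
      assume a: "\<not> ?thesis"
      have jni: "j \<notin> nest_of P i" using nest_eq_iff ij diff by auto
      have nfk: "\<not> (\<exists>S\<in>design n b \<sigma>. forces S i k)" if k: "k \<in> nest_of P i" "k \<noteq> i" for k
      proof
        assume "\<exists>S\<in>design n b \<sigma>. forces S i k"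
        hence ne: "E1 i k \<noteq> None" using E1_None[of i k] by simp
        have kn: "k \<in> {1..n}" using in_nest ij(1) k(1) by blast
        have "nest_of P i = nest_of P k" using nest_eq_iff ij kn k by auto
        hence "E1 i k = Some 1" using E1_val[OF ij(1) kn k(2)[symmetric] ne] by simp
        hence "step2 n E1 i k = Some 1" using step2_keep[of E1 i k] ne by simp
        thus False using a kn k jni by auto
      qed
      obtain l0 where l0: "l0 \<in> {1..Lnum b n}" "\<sigma> i l0 \<noteq> \<sigma> j l0" using sig_inj[OF ij(1,2)] ij(3) by blast
      define S0 where "S0 = exp_set n \<sigma> l0 (\<sigma> j l0)"
      have S0D: "S0 \<in> design n b \<sigma>" unfolding S0_def using exp_design l0 sig_lt ij by simp
      have iS0: "i \<in> S0" "j \<notin> S0" using l0 ij unfolding S0_def exp_mem by auto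
      have "BF i S0 \<noteq> BF 0 S0" using nf S0D iS0 ij unfolding forces_def by auto
      hence "\<not> nest_of P i \<subseteq> S0" using boost_iff(2)[OF design_sub[OF S0D] iS0(1)] by simp
      then obtain z where z: "z \<in> nest_of P i" "z \<notin> S0" by auto
      have zn: "z \<in> {1..n}" using in_nest ij(1) z(1) by blast
      have zl0: "\<sigma> z l0 = \<sigma> j l0" using z zn unfolding S0_def exp_mem by auto
      have zi: "z \<noteq> i" using zl0 l0 by auto
      have nzi: "nest_of P i = nest_of P z" using nest_eq_iff ij zn z by auto
      have "z = j"
      proof (rule sig_inj[OF zn ij(2)])
        fix l assume l: "l \<in> {1..Lnum b n}"
        show "\<sigma> z l = \<sigma> j l"
        proof (cases "\<sigma> i l = \<sigma> j l")
          case True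
          show ?thesis
          proof (rule ccontr)
            assume zne: "\<sigma> z l \<noteq> \<sigma> j l"
            define S where "S = exp_set n \<sigma> l (\<sigma> z l)"
            have SD: "S \<in> design n b \<sigma>" unfolding S_def using exp_design l sig_lt zn by simp
            have xS: "i \<in> S" "j \<in> S" "z \<notin> S" using True zne ij zn unfolding S_def exp_mem by auto
            have "BF 0 S < BF i S" using boost_iff(1)[OF design_sub[OF SD] xS(1)] xS z by auto
            hence "forces S i j" using xS ij unfolding forces_def by auto
            thus False using nf SD by auto
          qed
        next
          case False
          define S where "S = exp_set n \<sigma> l (\<sigma> j l)"
          have SD: "S \<in> design n b \<sigma>" unfolding S_def using exp_design l sig_lt ij by simp
          have xS: "i \<in> S" "j \<notin> S" using False ij unfolding S_def exp_mem by auto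
          have "BF i S \<noteq> BF 0 S" using nf SD xS ij unfolding forces_def by auto
          hence "\<not> nest_of P i \<subseteq> S" using boost_iff(2)[OF design_sub[OF SD] xS(1)] by simp
          then obtain z' where z': "z' \<in> nest_of P i" "z' \<notin> S" by auto
          have z'n: "z' \<in> {1..n}" using in_nest ij(1) z'(1) by blast
          have z'l: "\<sigma> z' l = \<sigma> j l" using z' z'n unfolding S_def exp_mem by auto
          have "\<sigma> z' l = \<sigma> i l \<or> \<sigma> z' l = \<sigma> z l"
            using null_same[OF ij(1) zn zi[symmetric] nzi nfk[OF z(1) zi] l z'(1)] .
          thus ?thesis using z'l False by auto
        qed
      qed
      thus False using z jni by simp
    qed
    have "step3 n (step2 n E1) i j = None" unfolding step3_def using e2 ex by auto
    thus ?thesis using diff unfolding step4_def by simp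
  qed
qed

end

theorem theorem4p5:
  fixes n b :: nat and \<sigma> :: "nat \<Rightarrow> nat \<Rightarrow> nat" and P :: "nat set set"
    and v :: "nat \<Rightarrow> real" and lam vN :: "nat set \<Rightarrow> real" and ord :: "nat set list"
    and i j :: nat
  assumes "2 \<le> n" and "2 \<le> b" and "valid_encoding n b \<sigma>"
    and "NL_model n P v lam vN"
    and "assumption1 P lam"
    and "assumption2 (design n b \<sigma>) P v lam"
    and "set ord = design n b \<sigma>" and "distinct ord"
    and "i \<in> {1..n}" and "j \<in> {1..n}" and "i \<noteq> j"
  shows "algorithm1 n (boost_factor P v lam vN n) ord i j
           = (if nest_of P i = nest_of P j then 1 else 0)"
  proof -
  interpret setting2 n b \<sigma> P v lam vN ord
    using assms(3-7) by unfold_locales simp_all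
  show ?thesis using main_pair[OF assms(9,10,11)] unfolding algorithm1_def E1_def by simp
qed

end
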